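(* Let $(X,\beta,m)$ be a non-atomic standard probability space and $\tau$ an ergodic invertible measure-preserving map of $X$. Let $(\epsilon_n)_{n\ge1}$ be a decreasing sequence with $0<\epsilon_n\le1$, $\epsilon_n\to0$, and $\sum_{n=1}^\infty\epsilon_n=\infty$. Then there is a decreasing sequence $(B_n)_{n\ge1}$ of measurable sets with $m(B_n)=\epsilon_n$ for all $n$ which is an a.e. visible shrinking target for $\tau$: for a.e. $x\in X$, $\tau^n(x)\in B_n$ for infinitely many $n$. *)

theory Defs
  imports "HOL-Probability.Probability"
begin

text \<open>Standard probability space: a Polish space with its Borel sigma-algebra
  (every standard Borel space is isomorphic to such) carrying a probability measure.\<close>
definition standard_prob_space :: "'a::polish_space measure \<Rightarrow> bool" where
  "standard_prob_space M \<longleftrightarrow> prob_space M \<and> sets M = sets borel"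

definition non_atomic :: "'a measure \<Rightarrow> bool" where
  "non_atomic M \<longleftrightarrow> (\<forall>A\<in>sets M. measure M A > 0 \<longrightarrow>
      (\<exists>B\<in>sets M. B \<subseteq> A \<and> 0 < measure M B \<and> measure M B < measure M A))"

definition measure_preserving_map :: "'a measure \<Rightarrow> ('a \<Rightarrow> 'a) \<Rightarrow> bool" where
  "measure_preserving_map M T \<longleftrightarrow> T \<in> measurable M M \<and> distr M M T = M"

definition invertible_mpt :: "'a measure \<Rightarrow> ('a \<Rightarrow> 'a) \<Rightarrow> bool" where
  "invertible_mpt M T \<longleftrightarrow> bij_betw T (space M) (space M) \<and> measure_preserving_map M T
      \<and> measure_preserving_map M (inv_into (space M) T)"

definition ergodic :: "'a measure \<Rightarrow> ('a \<Rightarrow> 'a) \<Rightarrow> bool" where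
  "ergodic M T \<longleftrightarrow> (\<forall>A\<in>sets M. T -` A \<inter> space M = A \<longrightarrow> measure M A = 0 \<or> measure M A = 1)"

end

theory Submission
  imports Defs
begin

locale tgt = prob_space M for M :: "'a measure" +
  fixes T :: "'a \<Rightarrow> 'a"
  assumes spc: "space M = UNIV"
  and na: "non_atomic M"
  and Tm: "T \<in> measurable M M"
  and Tp: "\<And>A. A \<in> sets M \<Longrightarrow> measure M (T -` A) = measure M A"
  and erg: "ergodic M T"
begin

lemma sets_pre: "f \<in> measurable M M \<Longrightarrow> A \<in> sets M \<Longrightarrow> f -` A \<in> sets M"
  using measurable_sets[of f M M A] spc by simp

lemma half:
  assumes A: "A \<in> sets M" and pos: "0 < measure M A"
  shows "\<exists>B\<in>sets M. B \<subseteq> A \<and> 0 < measure M B \<and> measure M B \<le> measure M A / 2"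
proof -
  obtain B where B: "B \<in> sets M" "B \<subseteq> A" "0 < measure M B" "measure M B < measure M A"
    using na A pos unfolding non_atomic_def by blast
  show ?thesis
  proof (cases "measure M B \<le> measure M A / 2")
    case True then show ?thesis using B by blast
  next
    case False
    have "measure M (A - B) = measure M A - measure M B"
      using finite_measure_Diff[OF A B(1,2)] .
    then show ?thesis using False B A by (intro bexI[of _ "A - B"]) auto
  qed
qed

lemma small:
  assumes A: "A \<in> sets M" and pos: "0 < measure M A" and eta: "0 < \<eta>"
  shows "\<exists>B\<in>sets M. B \<subseteq> A \<and> 0 < measure M B \<and> measure M B < \<eta>"
proof -
  have k: "\<exists>B\<in>sets M. B \<subseteq> A \<and> 0 < measure M B \<and> measure M B \<le> measure M A / 2^k" for k
  proof (induction k)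
    case 0 then show ?case using A pos by auto
  next
    case (Suc k)
    then obtain B where B: "B\<in>sets M" "B \<subseteq> A" "0 < measure M B" "measure M B \<le> measure M A / 2^k" by blast
    obtain C where C: "C\<in>sets M" "C \<subseteq> B" "0 < measure M C" "measure M C \<le> measure M B / 2"
      using half[OF B(1,3)] by blast
    have "measure M C * 2^k \<le> measure M B / 2 * 2^k" using C(4) by (simp add: mult_right_mono)
    also have "\<dots> \<le> measure M A / 2" using B(4) by (simp add: field_simps)
    finally have "measure M C \<le> measure M A / 2^Suc k" by (simp add: field_simps)
    with B C show ?case by blast
  qed
  obtain k where "1/\<eta> < (2::real)^k" using real_arch_pow[of 2 "1/\<eta>"] by auto
  then have k2: "1 / 2^k < \<eta>" using eta by (simp add: field_simps)
  obtain B where B: "B\<in>sets M" "B \<subseteq> A" "0 < measure M B" "measure M B \<le> measure M A / 2^k"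
    using k by blast
  have "measure M A \<le> 1" by (rule prob_le_1)
  then have "measure M A / 2^k \<le> 1 / 2^k" by (simp add: divide_right_mono)
  then show ?thesis using B k2 by (intro bexI[of _ B]) auto
qed

lemma Tn_meas: "(T^^n) \<in> measurable M M"
  by (induction n) (auto intro: measurable_compose[OF _ Tm] simp: funpow_Suc_right)

lemma Tn_pres: "A \<in> sets M \<Longrightarrow> measure M ((T^^n) -` A) = measure M A"
proof (induction n)
  case 0 then show ?case by simp
next
  case (Suc n)
  have eq: "(T^^Suc n) -` A = T -` ((T^^n) -` A)" by (auto simp: funpow_swap1)
  have "measure M ((T^^Suc n) -` A) = measure M (T -` ((T^^n) -` A))" by (simp only: eq)
  also have "\<dots> = measure M ((T^^n) -` A)" by (rule Tp[OF sets_pre[OF Tn_meas Suc.prems]])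
  also have "\<dots> = measure M A" by (rule Suc.IH[OF Suc.prems])
  finally show ?case .
qed

lemma recur:
  assumes F: "F \<in> sets M" and pos: "0 < measure M F"
  shows "AE x in M. \<exists>k. (T^^k) x \<in> F"
proof -
  define G where "G N = (\<Union>k\<in>{N..}. (T^^k) -` F)" for N
  have Gs: "G N \<in> sets M" for N
    unfolding G_def using sets_pre[OF Tn_meas F] by auto
  have GN: "G N = (T^^N) -` G 0" for N
  proof
    show "G N \<subseteq> (T^^N) -` G 0"
    proof
      fix x assume "x \<in> G N"
      then obtain k where k: "k \<ge> N" "(T^^k) x \<in> F" unfolding G_def by auto
      have "(T^^k) x = (T^^(k-N)) ((T^^N) x)" using k(1)
        by (metis funpow_add le_add_diff_inverse2 o_apply)
      then show "x \<in> (T^^N) -` G 0" using k unfolding G_def by auto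
    qed
  next
    show "(T^^N) -` G 0 \<subseteq> G N"
    proof
      fix x assume "x \<in> (T^^N) -` G 0"
      then obtain k where k: "(T^^k) ((T^^N) x) \<in> F" unfolding G_def by auto
      have "(T^^(k+N)) x = (T^^k) ((T^^N) x)" by (simp add: funpow_add)
      then show "x \<in> G N" using k unfolding G_def by (intro UN_I[of "k+N"]) auto
    qed
  qed
  have Gm: "measure M (G N) = measure M (G 0)" for N
    using GN[of N] Tn_pres[OF Gs[of 0], of N] by simp
  define I where "I = (\<Inter>N. G N)"
  have Is: "I \<in> sets M" unfolding I_def using Gs by auto
  have TI: "T -` I \<inter> space M = I"
  proof -
    have "x \<in> T -` I \<longleftrightarrow> x \<in> I" for x
    proof
      assume "x \<in> T -` I"
      then have h: "\<forall>N. \<exists>k\<ge>N. (T^^k) (T x) \<in> F" unfolding I_def G_def by auto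
      have "\<exists>k\<ge>N. (T^^k) x \<in> F" for N
      proof -
        obtain k where "k \<ge> N" "(T^^k) (T x) \<in> F" using h by blast
        then show "\<exists>k\<ge>N. (T^^k) x \<in> F"
          by (intro exI[of _ "Suc k"]) (auto simp: funpow_swap1)
      qed
      then show "x \<in> I" unfolding I_def G_def by auto
    next
      assume "x \<in> I"
      then have h: "\<forall>N. \<exists>k\<ge>N. (T^^k) x \<in> F" unfolding I_def G_def by auto
      have "\<exists>k\<ge>N. (T^^k) (T x) \<in> F" for N
      proof -
        obtain k where k: "k \<ge> Suc N" "(T^^k) x \<in> F" using h by blast
        then obtain k' where "k = Suc k'" by (cases k) auto
        then show "\<exists>k\<ge>N. (T^^k) (T x) \<in> F"
          using k by (intro exI[of _ k']) (auto simp: funpow_swap1)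
      qed
      then show "x \<in> T -` I" unfolding I_def G_def by auto
    qed
    then show ?thesis using spc by auto
  qed
  have I01: "measure M I = 0 \<or> measure M I = 1"
    using erg Is TI unfolding ergodic_def by blast
  have null: "G 0 - G N \<in> null_sets M" for N
  proof -
    have sub: "G N \<subseteq> G 0" unfolding G_def by auto
    have "measure M (G 0 - G N) = 0"
      using finite_measure_Diff[OF Gs Gs sub] Gm[of N] by simp
    then show ?thesis using Gs by (auto simp: null_sets_def emeasure_eq_measure)
  qed
  have eqGI: "G 0 - I = (\<Union>N. G 0 - G N)" unfolding I_def by auto
  have "(\<Union>N. G 0 - G N) \<in> null_sets M" using null by (intro null_sets_UN) auto
  then have GI: "G 0 - I \<in> null_sets M" by (simp only: eqGI)
  have "measure M I = 1"
  proof (rule ccontr)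
    assume "measure M I \<noteq> 1"
    then have "measure M I = 0" using I01 by auto
    then have "I \<in> null_sets M" using Is by (auto simp: null_sets_def emeasure_eq_measure)
    then have "(G 0 - I) \<union> I \<in> null_sets M" using GI by (intro null_sets.Un)
    moreover have "(G 0 - I) \<union> I = G 0 \<union> I" by auto
    ultimately have "G 0 \<in> null_sets M" using Gs Is by (metis null_sets_subset sup_ge1 sets.Un)
    moreover have "F \<subseteq> G 0" unfolding G_def by (auto intro: UN_I[of 0])
    ultimately have "measure M F = 0" using F by (metis measure_eq_0_null_sets null_sets_subset)
    then show False using pos by simp
  qed
  then have "AE x in M. x \<in> I" by (rule AE_prob_1)
  then show ?thesis by eventually_elim (auto simp: I_def G_def)
qed

end

context tgt
begin

lemma meas_le1: "measure M A \<le> 1"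
  by (rule prob_le_1)

lemma sierp:
  assumes S: "S \<in> sets M" and t: "0 \<le> t" "t \<le> measure M S"
  shows "\<exists>B\<in>sets M. B \<subseteq> S \<and> measure M B = t"
proof -
  define adm where "adm X C \<longleftrightarrow> C \<in> sets M \<and> C \<subseteq> S - X \<and> measure M X + measure M C \<le> t" for X C
  define \<sigma> where "\<sigma> X = Sup {measure M C | C. adm X C}" for X
  have bdd: "bdd_above {measure M C | C. adm X C}" for X
    using meas_le1 by (auto intro!: bdd_aboveI[of _ 1])
  have upper: "adm X C \<Longrightarrow> measure M C \<le> \<sigma> X" for X C
    unfolding \<sigma>_def by (rule cSup_upper[OF _ bdd]) auto
  have ex: "\<exists>C. adm X C \<and> \<sigma> X \<le> 2 * measure M C" if X: "X \<in> sets M" "measure M X \<le> t" for X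
  proof -
    have a0: "adm X {}" using X unfolding adm_def by auto
    then have ge0: "0 \<le> \<sigma> X" using upper[OF a0] by simp
    show ?thesis
    proof (cases "\<sigma> X = 0")
      case True then show ?thesis using a0 by auto
    next
      case False
      then have "\<sigma> X / 2 < \<sigma> X" using ge0 by simp
      then obtain v where v: "v \<in> {measure M C | C. adm X C}" "\<sigma> X / 2 < v"
        using less_cSupD[of "{measure M C | C. adm X C}" "\<sigma> X / 2"] a0 unfolding \<sigma>_def by blast
      then obtain C where "adm X C" "\<sigma> X / 2 < measure M C" by auto
      then show ?thesis by (intro exI[of _ C]) auto
    qed
  qed
  define ch where "ch X = (SOME C. adm X C \<and> \<sigma> X \<le> 2 * measure M C)" for X
  define Tk where "Tk = rec_nat {} (\<lambda>_ X. X \<union> ch X)"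
  have Tk0: "Tk 0 = {}" and TkS: "Tk (Suc k) = Tk k \<union> ch (Tk k)" for k
    unfolding Tk_def by simp_all
  have inv: "Tk k \<in> sets M \<and> Tk k \<subseteq> S \<and> measure M (Tk k) \<le> t
     \<and> measure M (Tk k) = (\<Sum>i<k. measure M (ch (Tk i)))
     \<and> adm (Tk k) (ch (Tk k)) \<and> \<sigma> (Tk k) \<le> 2 * measure M (ch (Tk k))" for k
  proof (induction k)
    case 0
    have "adm (Tk 0) (ch (Tk 0)) \<and> \<sigma> (Tk 0) \<le> 2 * measure M (ch (Tk 0))"
      unfolding ch_def by (rule someI_ex, rule ex) (use t in \<open>auto simp: Tk0\<close>)
    then show ?case by (simp add: Tk0 t)
  next
    case (Suc k)
    then have a: "adm (Tk k) (ch (Tk k))" by blast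
    have s1: "Tk (Suc k) \<in> sets M" using Suc a unfolding adm_def TkS by auto
    have m1: "measure M (Tk (Suc k)) = measure M (Tk k) + measure M (ch (Tk k))"
      unfolding TkS using Suc a unfolding adm_def by (intro finite_measure_Union) auto
    have "adm (Tk (Suc k)) (ch (Tk (Suc k))) \<and> \<sigma> (Tk (Suc k)) \<le> 2 * measure M (ch (Tk (Suc k)))"
      unfolding ch_def by (rule someI_ex, rule ex) (use s1 m1 a in \<open>auto simp: adm_def\<close>)
    then show ?case using Suc a s1 m1 unfolding adm_def TkS by auto
  qed
  have mt: "measure M (Tk k) \<le> t" for k using inv by blast
  have summ: "summable (\<lambda>i. measure M (ch (Tk i)))"
    by (rule summableI_nonneg_bounded[of _ t]) (use inv in \<open>auto, metis\<close>)
  have lim0: "(\<lambda>i. 2 * measure M (ch (Tk i))) \<longlonglongrightarrow> 0"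
    using tendsto_mult_right_zero[OF summable_LIMSEQ_zero[OF summ], of 2] by simp
  define U where "U = (\<Union>k. Tk k)"
  have inc: "incseq Tk" by (rule incseq_SucI) (auto simp: TkS)
  have Us: "U \<in> sets M" unfolding U_def using inv by auto
  have US: "U \<subseteq> S" unfolding U_def using inv by auto
  have limU: "(\<lambda>k. measure M (Tk k)) \<longlonglongrightarrow> measure M U"
    unfolding U_def by (rule finite_Lim_measure_incseq) (use inv inc in auto)
  have Ut: "measure M U \<le> t"
    by (rule LIMSEQ_le_const2[OF limU]) (use mt in auto)
  show ?thesis
  proof (cases "measure M U = t")
    case True then show ?thesis using Us US by blast
  next
    case False
    then have lt: "measure M U < t" using Ut by simp
    have "measure M (S - U) = measure M S - measure M U"
      by (rule finite_measure_Diff[OF S Us US])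
    then have pos: "0 < measure M (S - U)" using lt t by simp
    obtain B where B: "B \<in> sets M" "B \<subseteq> S - U" "0 < measure M B" "measure M B < t - measure M U"
      using small[OF _ pos, of "t - measure M U"] S Us lt by auto
    have "measure M B \<le> 2 * measure M (ch (Tk k))" for k
    proof -
      have "measure M (Tk k) \<le> measure M U"
        using Us by (intro finite_measure_mono) (auto simp: U_def)
      then have "adm (Tk k) B" using B unfolding adm_def U_def by auto
      then show ?thesis using upper inv[of k] by force
    qed
    moreover obtain k where "2 * measure M (ch (Tk k)) < measure M B"
      using order_tendstoD(2)[OF lim0 B(3)] by (auto simp: eventually_sequentially)
    ultimately show ?thesis by (meson not_le)
  qed
qed

end

lemma least_shift:
  fixes P :: "nat \<Rightarrow> bool"
  assumes "P k" "n \<le> (LEAST k. P k)"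
  shows "(LEAST k. P (k + n)) = (LEAST k. P k) - n"
proof (rule Least_equality)
  have "P (LEAST k. P k)" using assms(1) by (rule LeastI)
  then show "P ((LEAST k. P k) - n + n)" using assms(2) by simp
next
  fix y assume "P (y + n)"
  then have "(LEAST k. P k) \<le> y + n" by (rule Least_le)
  then show "(LEAST k. P k) - n \<le> y" by simp
qed

lemma mod_sub_small:
  fixes q n h :: nat
  assumes "n \<le> q mod h"
  shows "(q - n) mod h = q mod h - n"
proof -
  have q: "q = q div h * h + q mod h" by simp
  have "q - n = q div h * h + (q mod h - n)" using assms q by linarith
  then have "(q - n) mod h = (q mod h - n) mod h" by simp
  also have "\<dots> = q mod h - n"
  proof (cases "h = 0")
    case True then show ?thesis by simp
  next
    case False then have "q mod h < h" by simp
    then show ?thesis by simp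
  qed
  finally show ?thesis .
qed

context tgt
begin

lemma tower:
  fixes h :: nat
  assumes h: "0 < h"
  shows "\<exists>lv. lv \<in> measurable M (count_space UNIV) \<and> (\<forall>x. lv x < h)
     \<and> (AE x in M. \<forall>n. lv x + n < h \<longrightarrow> lv ((T^^n) x) = lv x + n)
     \<and> (\<forall>s. measure M {x. lv x = s} \<le> 2 / real h)"
proof -
  have "0 < 1 / (real h)^2" using h by simp
  moreover have "measure M UNIV = 1" using prob_space spc by simp
  ultimately obtain F where F: "F \<in> sets M" "0 < measure M F" "measure M F < 1 / (real h)^2"
    using small[of UNIV "1 / (real h)^2"] spc sets.top[of M] by auto
  define q where "q x = (LEAST k. (T^^k) x \<in> F)" for x
  define lv where "lv x = h - 1 - q x mod h" for x
  define G where "G = {x. \<exists>k. (T^^k) x \<in> F}"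
  have Gs: "G \<in> sets M"
  proof -
    have "G = (\<Union>k. (T^^k) -` F)" unfolding G_def by auto
    then show ?thesis using sets_pre[OF Tn_meas F(1)] by auto
  qed
  have AEG: "AE x in M. x \<in> G" using recur[OF F(1,2)] unfolding G_def by simp
  have cG: "UNIV - G \<in> sets M" using Gs spc sets.compl_sets[of G M] by (simp add: Compl_eq_Diff_UNIV)
  have nullG: "UNIV - G \<in> null_sets M"
    using AEG cG Gs spc by (subst (asm) AE_iff_measurable[of "UNIV - G"]) (auto simp: null_sets_def)
  have mG: "measure M (UNIV - G) = 0" using nullG by (simp add: measure_eq_0_null_sets)
  have qm: "q \<in> measurable M (count_space UNIV)"
    unfolding q_def
  proof (rule measurable_Least)
    fix i
    have e: "{x \<in> space M. (T^^i) x \<in> F} = (T^^i) -` F" using spc by auto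
    have "{x \<in> space M. (T^^i) x \<in> F} \<in> sets M" unfolding e using sets_pre[OF Tn_meas F(1), of i] .
    then show "(\<lambda>x. (T^^i) x \<in> F) \<in> measurable M (count_space UNIV)"
      by (simp add: pred_def)
  qed
  have lm: "lv \<in> measurable M (count_space UNIV)"
    unfolding lv_def by (rule measurable_compose[OF qm]) simp
  have lt: "lv x < h" for x unfolding lv_def using h by simp
  have qshift: "q ((T^^n) x) = q x - n" if xG: "x \<in> G" and nq: "n \<le> q x" for x n
  proof -
    obtain k where k: "(T^^k) x \<in> F" using xG unfolding G_def by auto
    have "q ((T^^n) x) = (LEAST k. (T^^(k+n)) x \<in> F)"
      unfolding q_def by (simp add: funpow_add)
    also have "\<dots> = q x - n" unfolding q_def
      by (rule least_shift[of "\<lambda>k. (T^^k) x \<in> F"]) (use k nq in \<open>auto simp: q_def\<close>)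
    finally show ?thesis .
  qed
  have tw: "lv ((T^^n) x) = lv x + n" if x: "x \<in> G" and n: "lv x + n < h" for x n
  proof -
    have r: "q x mod h < h" using h by simp
    then have n1: "n \<le> q x mod h" using n unfolding lv_def by linarith
    then have n2: "n \<le> q x" by (meson dual_order.trans mod_less_eq_dividend)
    have "lv ((T^^n) x) = h - 1 - (q x - n) mod h" unfolding lv_def qshift[OF x n2] ..
    also have "\<dots> = h - 1 - (q x mod h - n)" using mod_sub_small[OF n1] by simp
    also have "\<dots> = lv x + n" unfolding lv_def using r n1 by linarith
    finally show ?thesis .
  qed
  have AEtw: "AE x in M. \<forall>n. lv x + n < h \<longrightarrow> lv ((T^^n) x) = lv x + n"
    using AEG by eventually_elim (use tw in auto)
  define \<Lambda> where "\<Lambda> s = {x. lv x = s}" for s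
  have \<Lambda>s: "\<Lambda> s \<in> sets M" for s
  proof -
    have "\<Lambda> s = lv -` {s} \<inter> space M" unfolding \<Lambda>_def using spc by auto
    then show ?thesis using measurable_sets[OF lm, of "{s}"] by simp
  qed
  have a: "\<Lambda> s \<inter> G \<subseteq> T -` \<Lambda> (Suc s)" if "Suc s < h" for s
  proof
    fix x assume x: "x \<in> \<Lambda> s \<inter> G"
    then have "lv ((T^^1) x) = lv x + 1" using that by (intro tw) (auto simp: \<Lambda>_def)
    then show "x \<in> T -` \<Lambda> (Suc s)" using x by (auto simp: \<Lambda>_def)
  qed
  have b: "T -` \<Lambda> (Suc s) \<subseteq> \<Lambda> s \<union> F \<union> (UNIV - G)" if "Suc s < h" for s
  proof
    fix x assume x: "x \<in> T -` \<Lambda> (Suc s)"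
    show "x \<in> \<Lambda> s \<union> F \<union> (UNIV - G)"
    proof (cases "x \<in> G \<and> x \<notin> F")
      case False then show ?thesis by auto
    next
      case True
      have "q x \<noteq> 0"
      proof
        assume "q x = 0"
        obtain k where "(T^^k) x \<in> F" using True unfolding G_def by auto
        then have "(T^^(q x)) x \<in> F" unfolding q_def by (rule LeastI)
        then show False using \<open>q x = 0\<close> True by simp
      qed
      then have q1: "q (T x) = q x - 1" using qshift[of x 1] True by simp
      have lT: "h - 1 - q (T x) mod h = Suc s" using x unfolding \<Lambda>_def lv_def by simp
      have rT: "q (T x) mod h < h" using h by simp
      with lT have r': "q (T x) mod h = h - 2 - s" by linarith
      have qx: "q x = Suc (q (T x))" using q1 \<open>q x \<noteq> 0\<close> by simp
      have "q x mod h = Suc (q (T x) mod h)"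
        unfolding qx mod_Suc using r' that by auto
      then have "lv x = s" unfolding lv_def using r' that by simp
      then show ?thesis by (simp add: \<Lambda>_def)
    qed
  qed
  have c: "measure M (\<Lambda> s) \<le> measure M (\<Lambda> (Suc s))" if "Suc s < h" for s
  proof -
    have "measure M (\<Lambda> s) \<le> measure M ((\<Lambda> s \<inter> G) \<union> (UNIV - G))"
      using \<Lambda>s Gs cG by (intro finite_measure_mono) auto
    also have "\<dots> \<le> measure M (\<Lambda> s \<inter> G) + measure M (UNIV - G)"
      using \<Lambda>s Gs cG by (intro measure_Un_le) auto
    also have "\<dots> = measure M (\<Lambda> s \<inter> G)" using mG by simp
    also have "\<dots> \<le> measure M (T -` \<Lambda> (Suc s))"
      using a[OF that] sets_pre[OF Tm \<Lambda>s] by (intro finite_measure_mono) auto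
    also have "\<dots> = measure M (\<Lambda> (Suc s))" using Tp[OF \<Lambda>s] .
    finally show ?thesis .
  qed
  have d: "measure M (\<Lambda> (Suc s)) \<le> measure M (\<Lambda> s) + measure M F" if "Suc s < h" for s
  proof -
    have "measure M (\<Lambda> (Suc s)) = measure M (T -` \<Lambda> (Suc s))" using Tp[OF \<Lambda>s] by simp
    also have "\<dots> \<le> measure M (\<Lambda> s \<union> F \<union> (UNIV - G))"
      using b[OF that] \<Lambda>s Gs F cG by (intro finite_measure_mono) auto
    also have "\<dots> \<le> measure M (\<Lambda> s \<union> F) + measure M (UNIV - G)"
      using \<Lambda>s Gs F cG by (intro measure_Un_le) auto
    also have "\<dots> \<le> measure M (\<Lambda> s) + measure M F + measure M (UNIV - G)"
      using \<Lambda>s F by (simp add: measure_Un_le)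
    finally show ?thesis using mG by simp
  qed
  have f: "measure M (\<Lambda> 0) \<le> measure M (\<Lambda> s)" if "s < h" for s
    using that
  proof (induction s)
    case 0 then show ?case by simp
  next
    case (Suc s) then show ?case using c[of s] by simp
  qed
  have g: "measure M (\<Lambda> s) \<le> measure M (\<Lambda> 0) + real s * measure M F" if "s < h" for s
    using that
  proof (induction s)
    case 0 then show ?case by simp
  next
    case (Suc s) then show ?case using d[of s] by (simp add: algebra_simps)
  qed
  have tot: "(\<Sum>s<h. measure M (\<Lambda> s)) = 1"
  proof -
    have "UNIV = (\<Union>s\<in>{..<h}. \<Lambda> s)" using lt unfolding \<Lambda>_def by auto
    then have "1 = measure M (\<Union>s\<in>{..<h}. \<Lambda> s)" using prob_space spc by simp
    also have "\<dots> = (\<Sum>s<h. measure M (\<Lambda> s))"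
      using \<Lambda>s by (intro finite_measure_finite_Union) (auto simp: disjoint_family_on_def \<Lambda>_def)
    finally show ?thesis by simp
  qed
  have "(\<Sum>s<h. measure M (\<Lambda> 0)) \<le> (\<Sum>s<h. measure M (\<Lambda> s))"
    using f by (intro sum_mono) auto
  then have "real h * measure M (\<Lambda> 0) \<le> 1" using tot by simp
  then have L0: "measure M (\<Lambda> 0) \<le> 1 / real h" using h by (simp add: field_simps)
  have bound: "measure M (\<Lambda> s) \<le> 2 / real h" for s
  proof (cases "s < h")
    case True
    have "real s * measure M F \<le> real h * (1 / (real h)^2)"
      using True F(2,3) by (intro mult_mono) auto
    also have "\<dots> = 1 / real h" by (simp add: power2_eq_square)
    finally show ?thesis using g[OF True] L0 by simp
  next
    case False
    then have "\<Lambda> s = {}" using lt unfolding \<Lambda>_def by (auto simp: not_less) (metis leD)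
    then show ?thesis by simp
  qed
  show ?thesis using lm lt AEtw bound unfolding \<Lambda>_def by blast
qed

end

fun fl :: "nat list \<Rightarrow> nat \<Rightarrow> nat" where
  "fl [] s = 0"
| "fl (d#ds) s = (if s < d then (if Suc s = d then d else 0) else fl ds (s - d))"

lemma fl_count:
  assumes "1 \<le> n"
  shows "card {s. s < sum_list ds \<and> n \<le> fl ds s} = length (filter (\<lambda>d. n \<le> d) ds)"
proof (induction ds)
  case Nil then show ?case using assms by simp
next
  case (Cons d ds)
  let ?A = "{s. s < d \<and> n \<le> fl (d#ds) s}"
  let ?B = "{s. s < sum_list ds \<and> n \<le> fl ds s}"
  have eq: "{s. s < sum_list (d#ds) \<and> n \<le> fl (d#ds) s} = ?A \<union> (\<lambda>s. s + d) ` ?B"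
  proof (rule set_eqI, rule iffI)
    fix s assume s: "s \<in> {s. s < sum_list (d#ds) \<and> n \<le> fl (d#ds) s}"
    show "s \<in> ?A \<union> (\<lambda>s. s + d) ` ?B"
    proof (cases "s < d")
      case True then show ?thesis using s by auto
    next
      case False
      then have "s - d \<in> ?B" using s by auto
      moreover have "s = (s - d) + d" using False by simp
      ultimately show ?thesis by blast
    qed
  next
    fix s assume "s \<in> ?A \<union> (\<lambda>s. s + d) ` ?B"
    then show "s \<in> {s. s < sum_list (d#ds) \<and> n \<le> fl (d#ds) s}" by auto
  qed
  have A: "?A = (if n \<le> d then {d - 1} else {})"
    using assms by (auto split: if_splits)
  have "card (?A \<union> (\<lambda>s. s + d) ` ?B) = card ?A + card ((\<lambda>s. s + d) ` ?B)"
    by (rule card_Un_disjoint) auto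
  also have "card ((\<lambda>s. s + d) ` ?B) = card ?B" by (rule card_image) (auto simp: inj_on_def)
  finally show ?case using eq A Cons by simp
qed

lemma fl_cover:
  "card {i. i < sum_list ds \<and> \<not>(\<exists>s<sum_list ds. i + N \<le> s \<and> s \<le> i + fl ds s)} \<le> N * length ds"
proof (induction ds)
  case Nil then show ?case by simp
next
  case (Cons d ds)
  let ?U = "\<lambda>ds. {i. i < sum_list ds \<and> \<not>(\<exists>s<sum_list ds. i + N \<le> s \<and> s \<le> i + fl ds s)}"
  have sub: "?U (d#ds) \<subseteq> {i. i < d \<and> d \<le> i + N} \<union> (\<lambda>i. i + d) ` ?U ds"
  proof
    fix i assume i: "i \<in> ?U (d#ds)"
    show "i \<in> {i. i < d \<and> d \<le> i + N} \<union> (\<lambda>i. i + d) ` ?U ds"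
    proof (cases "i < d")
      case True
      show ?thesis
      proof (rule ccontr)
        assume "\<not> ?thesis"
        then have "i + N \<le> d - 1" using True by auto
        moreover have "fl (d#ds) (d - 1) = d" using True by simp
        moreover have "d - 1 < sum_list (d#ds)" using True by simp
        ultimately show False using i True by force
      qed
    next
      case False
      have l1: "i - d < sum_list ds" using i False by auto
      have l2: "\<not>(\<exists>s<sum_list ds. i - d + N \<le> s \<and> s \<le> i - d + fl ds s)"
      proof
        assume "\<exists>s<sum_list ds. i - d + N \<le> s \<and> s \<le> i - d + fl ds s"
        then obtain s where s: "s < sum_list ds" "i - d + N \<le> s" "s \<le> i - d + fl ds s" by blast
        have "fl (d#ds) (s + d) = fl ds s" by simp
        then have "s + d < sum_list (d#ds) \<and> i + N \<le> s + d \<and> s + d \<le> i + fl (d#ds) (s + d)"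
          using s False by auto
        then show False using i by blast
      qed
      have "i - d \<in> ?U ds" using l1 l2 by blast
      moreover have "i = (i - d) + d" using False by simp
      ultimately show ?thesis by blast
    qed
  qed
  have c1: "card {i. i < d \<and> d \<le> i + N} \<le> N"
  proof -
    have "{i. i < d \<and> d \<le> i + N} \<subseteq> {d - N..<d}" by auto
    then have "card {i. i < d \<and> d \<le> i + N} \<le> card {d - N..<d}" by (intro card_mono) auto
    then show ?thesis by simp
  qed
  have "card (?U (d#ds)) \<le> card ({i. i < d \<and> d \<le> i + N} \<union> (\<lambda>i. i + d) ` ?U ds)"
    by (rule card_mono[OF _ sub]) auto
  also have "\<dots> \<le> card {i. i < d \<and> d \<le> i + N} + card ((\<lambda>i. i + d) ` ?U ds)"
    by (rule card_Un_le)
  also have "\<dots> \<le> N + card (?U ds)" using c1 card_image_le[of "?U ds" "\<lambda>i. i + d"] by auto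
  also have "\<dots> \<le> N + N * length ds" using Cons by simp
  finally show ?case by simp
qed

lemma sum_list_count:
  "\<forall>x\<in>set xs. x \<le> B \<Longrightarrow> sum_list xs = (\<Sum>n\<in>{1..B}. length (filter (\<lambda>d. n \<le> d) xs))"
proof (induction xs)
  case Nil then show ?case by simp
next
  case (Cons x xs)
  have "(\<Sum>n\<in>{1..B}. length (filter (\<lambda>d. n \<le> d) (x#xs)))
      = (\<Sum>n\<in>{1..B}. (if n \<le> x then 1 else 0)) + (\<Sum>n\<in>{1..B}. length (filter (\<lambda>d. n \<le> d) xs))"
    unfolding sum.distrib[symmetric] by (intro sum.cong) auto
  also have "(\<Sum>n\<in>{1..B}. (if n \<le> x then 1 else 0::nat)) = card ({1..B} \<inter> {n. n \<le> x})"
    by (simp add: sum.If_cases)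
  also have "{1..B} \<inter> {n. n \<le> x} = {1..x}" using Cons.prems by auto
  finally show ?case using Cons by simp
qed

lemma antimono_from:
  fixes F :: "nat \<Rightarrow> 'b::order"
  assumes "\<And>d. a \<le> d \<Longrightarrow> F (Suc d) \<le> F d" "a \<le> d" "d \<le> d'"
  shows "F d' \<le> F d"
  using assms(3)
proof (induction d')
  case 0 then show ?case by simp
next
  case (Suc e)
  show ?case
  proof (cases "d = Suc e")
    case True then show ?thesis by simp
  next
    case False
    then have "d \<le> e" using Suc.prems by simp
    then show ?thesis using Suc.IH assms(1)[of e] assms(2) by (meson order_trans)
  qed
qed

lemma telesc:
  fixes F :: "nat \<Rightarrow> nat"
  assumes "\<And>d. a \<le> d \<Longrightarrow> F (Suc d) \<le> F d" "a \<le> E"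
  shows "(\<Sum>d\<in>{a..<E}. F d - F (Suc d)) = F a - F E"
  using assms(2)
proof (induction E)
  case 0 then show ?case by simp
next
  case (Suc E)
  show ?case
  proof (cases "a = Suc E")
    case True then show ?thesis by simp
  next
    case False
    then have aE: "a \<le> E" using Suc by simp
    have mono: "F E \<le> F a" using antimono_from[of a F a E] assms(1) aE by simp
    have "(\<Sum>d\<in>{a..<Suc E}. F d - F (Suc d)) = (\<Sum>d\<in>{a..<E}. F d - F (Suc d)) + (F E - F (Suc E))"
      using aE by simp
    also have "\<dots> = F a - F E + (F E - F (Suc E))" using Suc.IH[OF aE] by simp
    also have "\<dots> = F a - F (Suc E)" using mono assms(1)[OF aE] by simp
    finally show ?thesis .
  qed
qed


lemma len_filter_replicate: "length (filter P (replicate k x)) = (if P x then k else 0)"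
  by (induction k) auto

lemma ds_exists:
  fixes \<epsilon> :: "nat \<Rightarrow> real"
  assumes pos: "\<forall>n\<ge>1. 0 < \<epsilon> n" and mono: "\<forall>n\<ge>1. \<epsilon> (Suc n) \<le> \<epsilon> n"
    and dv: "\<not> summable (\<lambda>n. \<epsilon> (Suc n))" and c: "0 < c" and D0: "1 \<le> D0"
  shows "\<exists>ds. ds \<noteq> [] \<and> (\<forall>d\<in>set ds. D0 \<le> d)
     \<and> (\<forall>n\<ge>1. real (length (filter (\<lambda>d. n \<le> d) ds)) \<le> c * real (sum_list ds) * \<epsilon> n)"
proof -
  have anti: "\<epsilon> m \<le> \<epsilon> n" if "1 \<le> n" "n \<le> m" for n m
    using antimono_from[of 1 \<epsilon> n m] mono that by auto
  have "\<not> summable (\<lambda>n. \<epsilon> (n + D0))"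
  proof
    assume "summable (\<lambda>n. \<epsilon> (n + D0))"
    then have "summable (\<lambda>n. \<epsilon> (Suc (n + (D0 - 1))))" using D0 by simp
    then have "summable (\<lambda>n. (\<lambda>m. \<epsilon> (Suc m)) (n + (D0 - 1)))" by simp
    then show False using dv summable_iff_shift[of "\<lambda>m. \<epsilon> (Suc m)" "D0 - 1"] by blast
  qed
  then obtain K where K: "(\<Sum>i<K. \<epsilon> (i + D0)) > 2 / c"
    using summableI_nonneg_bounded[of "\<lambda>n. \<epsilon> (n + D0)" "2 / c"] pos D0
    by (metis add_leD2 le_add2 less_eq_real_def not_le order_trans)
  define E where "E = D0 + K"
  have sumE: "(\<Sum>n\<in>{D0..<E}. \<epsilon> n) > 2 / c"
    using K sum.shift_bounds_nat_ivl[of \<epsilon> 0 D0 K] unfolding E_def by (simp add: add.commute lessThan_atLeast0)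
  have KE: "D0 < E"
  proof (rule ccontr)
    assume "\<not> D0 < E"
    then have "{D0..<E} = {}" by auto
    then show False using sumE c by simp
  qed
  define H where "H = c * real E"
  have H0: "0 < H" using c KE unfolding H_def by simp
  define F where "F d = (if d < E then nat \<lfloor>H * \<epsilon> d\<rfloor> else 0)" for d
  have Fanti: "F (Suc d) \<le> F d" if "D0 \<le> d" for d
  proof -
    have "\<epsilon> (Suc d) \<le> \<epsilon> d" using mono that D0 by simp
    then have "H * \<epsilon> (Suc d) \<le> H * \<epsilon> d" using H0 by simp
    then show ?thesis unfolding F_def by (auto intro: nat_mono floor_mono)
  qed
  have FE: "F E = 0" unfolding F_def by simp
  have Fle: "real (F d) \<le> H * \<epsilon> n" if "1 \<le> n" "n \<le> d" for n d
  proof (cases "d < E")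
    case True
    have "\<epsilon> d > 0" using pos that by simp
    then have "H * \<epsilon> d \<ge> 0" using H0 by simp
    then have "real (F d) \<le> H * \<epsilon> d" unfolding F_def using True by simp
    also have "\<dots> \<le> H * \<epsilon> n" using anti[OF that] H0 by simp
    finally show ?thesis .
  next
    case False
    have "\<epsilon> n > 0" using pos that by simp
    then show ?thesis unfolding F_def using H0 False by simp
  qed
  have Fge: "real (F d) \<ge> H * \<epsilon> d - 1" if "D0 \<le> d" "d < E" for d
  proof -
    have "\<epsilon> d > 0" using pos that D0 by simp
    then have y: "H * \<epsilon> d \<ge> 0" using H0 by simp
    then have "real (F d) = real_of_int \<lfloor>H * \<epsilon> d\<rfloor>" unfolding F_def using that by simp
    then show ?thesis using floor_correct[of "H * \<epsilon> d"] by linarith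
  qed
  define ds where "ds = concat (map (\<lambda>d. replicate (F d - F (Suc d)) d) [D0..<E])"
  have setds: "D0 \<le> d \<and> d < E" if "d \<in> set ds" for d
    using that unfolding ds_def by (auto split: if_splits)
  have cnt: "length (filter (\<lambda>d. n \<le> d) ds) = F (max n D0)" for n
  proof -
    have "length (filter (\<lambda>d. n \<le> d) ds)
        = (\<Sum>d\<leftarrow>[D0..<E]. (if n \<le> d then F d - F (Suc d) else 0))"
      unfolding ds_def by (simp add: filter_concat length_concat comp_def len_filter_replicate)
    also have "\<dots> = (\<Sum>d\<in>{D0..<E}. (if n \<le> d then F d - F (Suc d) else 0))"
      by (simp add: sum_set_upt_conv_sum_list_nat[symmetric])
    also have "\<dots> = (\<Sum>d\<in>{max n D0..<E}. F d - F (Suc d))"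
      by (rule sum.mono_neutral_cong_right) auto
    also have "\<dots> = F (max n D0)"
    proof (cases "max n D0 \<le> E")
      case True
      then show ?thesis using telesc[of "max n D0" F E] Fanti FE by simp
    next
      case False
      then have "{max n D0..<E} = {}" by auto
      moreover have "F (max n D0) = 0"
      proof -
        have "\<not> max n D0 < E" using False by linarith
        then show ?thesis unfolding F_def by (simp only: if_False)
      qed
      ultimately show ?thesis by (metis sum.empty)
    qed
    finally show ?thesis .
  qed
  have sumds: "sum_list ds = (\<Sum>n\<in>{1..E}. F (max n D0))"
    using sum_list_count[of ds E] setds cnt by (simp add: less_imp_le)
  have "(\<Sum>n\<in>{D0..<E}. F n) \<le> (\<Sum>n\<in>{1..E}. F (max n D0))"
  proof -
    have "(\<Sum>n\<in>{D0..<E}. F n) = (\<Sum>n\<in>{D0..<E}. F (max n D0))" by (intro sum.cong) auto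
    also have "\<dots> \<le> (\<Sum>n\<in>{1..E}. F (max n D0))"
      using D0 by (intro sum_mono2) auto
    finally show ?thesis .
  qed
  then have s1: "real (sum_list ds) \<ge> (\<Sum>n\<in>{D0..<E}. real (F n))"
    unfolding sumds by (metis of_nat_le_iff of_nat_sum)
  have "(\<Sum>n\<in>{D0..<E}. real (F n)) \<ge> (\<Sum>n\<in>{D0..<E}. H * \<epsilon> n - 1)"
    using Fge by (intro sum_mono) auto
  also have "(\<Sum>n\<in>{D0..<E}. H * \<epsilon> n - 1) = H * (\<Sum>n\<in>{D0..<E}. \<epsilon> n) - real (E - D0)"
    by (simp add: sum_subtractf sum_distrib_left)
  finally have s2: "real (sum_list ds) \<ge> H * (\<Sum>n\<in>{D0..<E}. \<epsilon> n) - real (E - D0)" using s1 by linarith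
  have "H * (\<Sum>n\<in>{D0..<E}. \<epsilon> n) \<ge> H * (2 / c)" using sumE H0 by (intro mult_left_mono) auto
  also have "H * (2 / c) = 2 * real E" unfolding H_def using c by simp
  finally have "real (sum_list ds) \<ge> real E" using s2 by linarith
  then have big: "c * real (sum_list ds) \<ge> H" unfolding H_def using c by simp
  have ne: "ds \<noteq> []" using \<open>real (sum_list ds) \<ge> real E\<close> KE by auto
  have bnd: "real (length (filter (\<lambda>d. n \<le> d) ds)) \<le> c * real (sum_list ds) * \<epsilon> n" if n: "1 \<le> n" for n
  proof -
    have "real (length (filter (\<lambda>d. n \<le> d) ds)) \<le> H * \<epsilon> n"
      unfolding cnt using Fle[OF n] by simp
    also have "\<dots> \<le> c * real (sum_list ds) * \<epsilon> n" using big pos n by (simp add: mult_right_mono)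
    finally show ?thesis .
  qed
  show ?thesis using ne setds bnd by blast
qed


context tgt
begin

lemma lv_sets: "l \<in> measurable M (count_space UNIV) \<Longrightarrow> {x. l x \<in> S} \<in> sets M"
  using measurable_sets[of l M "count_space UNIV" S] spc by (simp add: vimage_def)

lemma level_bound:
  assumes lm: "l \<in> measurable M (count_space UNIV)" and b: "\<forall>s. measure M {x. l x = s} \<le> \<beta>"
    and S: "finite S"
  shows "measure M {x. l x \<in> S} \<le> real (card S) * \<beta>"
proof -
  have "{x. l x \<in> S} = (\<Union>s\<in>S. {x. l x = s})" by auto
  then have "measure M {x. l x \<in> S} \<le> (\<Sum>s\<in>S. measure M {x. l x = s})"
    using measure_UNION_le[OF S, of "\<lambda>s. {x. l x = s}" M] lv_sets[OF lm, of "{_}"] by simp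
  also have "\<dots> \<le> (\<Sum>s\<in>S. \<beta>)" using b by (intro sum_mono) auto
  finally show ?thesis by simp
qed

lemma pad:
  fixes \<epsilon> :: "nat \<Rightarrow> real" and K :: "nat \<Rightarrow> 'a set"
  assumes Ks: "\<And>n. K n \<in> sets M" and Kmono: "\<And>n. K (Suc n) \<subseteq> K n"
    and Kle: "\<And>n. 1 \<le> n \<Longrightarrow> measure M (K n) \<le> \<epsilon> n"
    and e1: "\<forall>n\<ge>1. \<epsilon> n \<le> 1" and emono: "\<forall>n\<ge>1. \<epsilon> (Suc n) \<le> \<epsilon> n"
  shows "\<exists>B. \<forall>n\<ge>1. B n \<in> sets M \<and> measure M (B n) = \<epsilon> n \<and> B (Suc n) \<subseteq> B n \<and> K n \<subseteq> B n"
proof -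
  define e' where "e' n = (if n = 0 then 1 else \<epsilon> n)" for n
  have e'mono: "e' (Suc n) \<le> e' n" for n using e1 emono unfolding e'_def by auto
  define P where "P n X B' \<longleftrightarrow> B' \<in> sets M \<and> K (Suc n) \<subseteq> B' \<and> B' \<subseteq> X \<and> measure M B' = e' (Suc n)" for n X B'
  define B where "B = rec_nat UNIV (\<lambda>n X. SOME B'. P n X B')"
  have B0: "B 0 = UNIV" and BS: "B (Suc n) = (SOME B'. P n (B n) B')" for n
    unfolding B_def by simp_all
  have ex: "\<exists>B'. P n X B'" if X: "X \<in> sets M" "K (Suc n) \<subseteq> X" "measure M X = e' n" for n X
  proof -
    have KS: "K (Suc n) \<in> sets M" by (rule Ks)
    have mK: "measure M (K (Suc n)) \<le> e' (Suc n)" using Kle[of "Suc n"] unfolding e'_def by simp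
    have "measure M (X - K (Suc n)) = measure M X - measure M (K (Suc n))"
      by (rule finite_measure_Diff[OF X(1) KS X(2)])
    then have t: "0 \<le> e' (Suc n) - measure M (K (Suc n))"
       "e' (Suc n) - measure M (K (Suc n)) \<le> measure M (X - K (Suc n))"
      using mK e'mono[of n] X(3) by auto
    obtain C where C: "C \<in> sets M" "C \<subseteq> X - K (Suc n)" "measure M C = e' (Suc n) - measure M (K (Suc n))"
      using sierp[OF _ t] X(1) KS by blast
    have "measure M (K (Suc n) \<union> C) = measure M (K (Suc n)) + measure M C"
      using C KS by (intro finite_measure_Union) auto
    then have "P n X (K (Suc n) \<union> C)" unfolding P_def using C KS X by auto
    then show ?thesis by blast
  qed
  have Q: "B n \<in> sets M \<and> K (Suc n) \<subseteq> B n \<and> measure M (B n) = e' n" for n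
  proof (induction n)
    case 0 then show ?case using B0 spc prob_space sets.top[of M] by (simp add: e'_def)
  next
    case (Suc n)
    have "P n (B n) (B (Suc n))" unfolding BS by (rule someI_ex, rule ex) (use Suc in auto)
    then show ?case unfolding P_def using Kmono by blast
  qed
  have step: "P n (B n) (B (Suc n))" for n unfolding BS by (rule someI_ex, rule ex) (use Q in auto)
  have "\<forall>n\<ge>1. B n \<in> sets M \<and> measure M (B n) = \<epsilon> n \<and> B (Suc n) \<subseteq> B n \<and> K n \<subseteq> B n"
  proof (intro allI impI)
    fix n :: nat assume n: "1 \<le> n"
    then obtain m where m: "n = Suc m" by (cases n) auto
    show "B n \<in> sets M \<and> measure M (B n) = \<epsilon> n \<and> B (Suc n) \<subseteq> B n \<and> K n \<subseteq> B n"
      using Q[of n] step[of n] step[of m] n unfolding P_def m e'_def by auto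
  qed
  then show ?thesis by blast
qed

end

lemma len_le_sum: "\<forall>d\<in>set xs. D \<le> d \<Longrightarrow> D * length xs \<le> sum_list xs"
  by (induction xs) auto

lemma aux_cancel: "0 < (L::real) \<Longrightarrow> 0 < D \<Longrightarrow> a * L * (2 / (D * L)) = 2 * a / D"
  by (simp add: field_simps)

lemma aux2: "0 < (a::real) \<Longrightarrow> 0 < t \<Longrightarrow> 2 * a / (4 * t * a) = 1/2 * (1/t)"
  by (simp add: field_simps)

context tgt
begin

theorem main_loc:
  fixes \<epsilon> :: "nat \<Rightarrow> real"
  assumes e0: "\<forall>n\<ge>1. 0 < \<epsilon> n \<and> \<epsilon> n \<le> 1" and emono: "\<forall>n\<ge>1. \<epsilon> (Suc n) \<le> \<epsilon> n"
    and dv: "\<not> summable (\<lambda>n. \<epsilon> (Suc n))"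
  shows "\<exists>B :: nat \<Rightarrow> 'a set. (\<forall>n\<ge>1. B n \<in> sets M \<and> measure M (B n) = \<epsilon> n \<and> B (Suc n) \<subseteq> B n)
         \<and> (AE x in M. \<exists>\<^sub>\<infinity>n. n \<ge> 1 \<and> (T ^^ n) x \<in> B n)"
proof -
  have epos: "\<forall>n\<ge>1. 0 < \<epsilon> n" and e1: "\<forall>n\<ge>1. \<epsilon> n \<le> 1" using e0 by auto
  define c where "c j = (1/2::real)^j / 4" for j :: nat
  define D where "D j = 4 * 2^j * (j+1)" for j :: nat
  have cpos: "0 < c j" for j unfolding c_def by simp
  have Dge: "1 \<le> D j" for j
  proof -
    have "0 < D j" unfolding D_def by simp
    then show ?thesis by simp
  qed
  have "\<forall>j. \<exists>ds. ds \<noteq> [] \<and> (\<forall>d\<in>set ds. D j \<le> d) \<and> (\<forall>n\<ge>1. real (length (filter (\<lambda>d. n \<le> d) ds)) \<le> c j * real (sum_list ds) * \<epsilon> n)"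
    using ds_exists[OF epos emono dv cpos Dge] by blast
  from choice[OF this] obtain ds where ds0: "\<forall>j. ds j \<noteq> [] \<and> (\<forall>d\<in>set (ds j). D j \<le> d) \<and> (\<forall>n\<ge>1. real (length (filter (\<lambda>d. n \<le> d) (ds j))) \<le> c j * real (sum_list (ds j)) * \<epsilon> n)"
    by blast
  have ds: "ds j \<noteq> [] \<and> (\<forall>d\<in>set (ds j). D j \<le> d) \<and> (\<forall>n\<ge>1. real (length (filter (\<lambda>d. n \<le> d) (ds j))) \<le> c j * real (sum_list (ds j)) * \<epsilon> n)" for j
    using ds0 by blast
  define h where "h j = sum_list (ds j)" for j
  have hlen: "D j * length (ds j) \<le> h j" for j unfolding h_def using ds[of j] len_le_sum by blast
  have hpos: "0 < h j" for j
  proof -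
    have "1 \<le> length (ds j)" using ds[of j] by (cases "ds j") auto
    then have "D j * 1 \<le> D j * length (ds j)" by (intro mult_le_mono2)
    then show ?thesis using hlen[of j] Dge[of j] by linarith
  qed
  have "\<forall>j. \<exists>l. l \<in> measurable M (count_space UNIV) \<and> (\<forall>x. l x < h j)
     \<and> (AE x in M. \<forall>n. l x + n < h j \<longrightarrow> l ((T^^n) x) = l x + n)
     \<and> (\<forall>s. measure M {x. l x = s} \<le> 2 / real (h j))"
    using tower[OF hpos] by blast
  from choice[OF this] obtain lv where lv0: "\<forall>j. lv j \<in> measurable M (count_space UNIV) \<and> (\<forall>x. lv j x < h j)
     \<and> (AE x in M. \<forall>n. lv j x + n < h j \<longrightarrow> lv j ((T^^n) x) = lv j x + n)
     \<and> (\<forall>s. measure M {x. lv j x = s} \<le> 2 / real (h j))"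
    by blast
  have lv: "lv j \<in> measurable M (count_space UNIV) \<and> (\<forall>x. lv j x < h j)
     \<and> (AE x in M. \<forall>n. lv j x + n < h j \<longrightarrow> lv j ((T^^n) x) = lv j x + n)
     \<and> (\<forall>s. measure M {x. lv j x = s} \<le> 2 / real (h j))" for j
    using lv0 by blast
  have lvm: "lv j \<in> measurable M (count_space UNIV)" for j using lv by blast
  have lvlt: "lv j x < h j" for j x using lv by blast
  have lvb: "\<forall>s. measure M {x. lv j x = s} \<le> 2 / real (h j)" for j using lv by blast
  define \<psi> where "\<psi> j x = fl (ds j) (lv j x)" for j x
  define K where "K n = {x. \<exists>j. n \<le> \<psi> j x}" for n
  define S where "S n j = {s. s < h j \<and> n \<le> fl (ds j) s}" for n j
  have AS: "{x. n \<le> \<psi> j x} = {x. lv j x \<in> S n j}" for n j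
    unfolding S_def \<psi>_def using lvlt by auto
  have Aj_sets: "{x. n \<le> \<psi> j x} \<in> sets M" for n j
    unfolding AS by (rule lv_sets[OF lvm])
  have Ks: "K n \<in> sets M" for n
  proof -
    have "K n = (\<Union>j. {x. n \<le> \<psi> j x})" unfolding K_def by auto
    then show ?thesis using Aj_sets by auto
  qed
  have Kmono: "K (Suc n) \<subseteq> K n" for n unfolding K_def by (auto dest: Suc_leD)
  have Aj_bound: "measure M {x. n \<le> \<psi> j x} \<le> \<epsilon> n / 2 * (1/2)^j" if n: "1 \<le> n" for n j
  proof -
    have fin: "finite (S n j)" unfolding S_def by auto
    have cardS: "card (S n j) = length (filter (\<lambda>d. n \<le> d) (ds j))"
      unfolding S_def h_def using fl_count[OF n, of "ds j"] by simp
    have "measure M {x. n \<le> \<psi> j x} \<le> real (card (S n j)) * (2 / real (h j))"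
      unfolding AS by (rule level_bound[OF lvm lvb fin])
    also have "\<dots> \<le> (c j * real (h j) * \<epsilon> n) * (2 / real (h j))"
      unfolding cardS h_def using ds[of j] n by (intro mult_right_mono) auto
    also have "\<dots> = 2 * c j * \<epsilon> n" using hpos[of j] by (simp add: field_simps)
    also have "\<dots> = \<epsilon> n / 2 * (1/2)^j" unfolding c_def by simp
    finally show ?thesis .
  qed
  have Kle: "measure M (K n) \<le> \<epsilon> n" if n: "1 \<le> n" for n
  proof -
    have geo: "(\<lambda>j. \<epsilon> n / 2 * (1/2::real)^j) sums (\<epsilon> n / 2 * 2)"
      using sums_mult[OF geometric_sums[of "1/2::real"], of "\<epsilon> n / 2"] by simp
    have summ: "summable (\<lambda>j. measure M {x. n \<le> \<psi> j x})"
      by (rule summable_comparison_test'[OF sums_summable[OF geo]]) (use Aj_bound[OF n] in auto)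
    have "K n = (\<Union>j. {x. n \<le> \<psi> j x})" unfolding K_def by auto
    then have "measure M (K n) \<le> (\<Sum>j. measure M {x. n \<le> \<psi> j x})"
      using finite_measure_subadditive_countably[of "\<lambda>j. {x. n \<le> \<psi> j x}"] Aj_sets summ by auto
    also have "\<dots> \<le> (\<Sum>j. \<epsilon> n / 2 * (1/2)^j)"
      by (rule suminf_le[OF _ summ sums_summable[OF geo]]) (use Aj_bound[OF n] in auto)
    also have "\<dots> = \<epsilon> n" using sums_unique[OF geo] by simp
    finally show ?thesis .
  qed
  obtain B where B: "\<forall>n\<ge>1. B n \<in> sets M \<and> measure M (B n) = \<epsilon> n \<and> B (Suc n) \<subseteq> B n \<and> K n \<subseteq> B n"
    using pad[OF Ks Kmono Kle e1 emono] by blast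
  define U where "U j = {i. i < h j \<and> \<not>(\<exists>s<h j. i + (j+1) \<le> s \<and> s \<le> i + fl (ds j) s)}" for j
  define bad where "bad j = {x. lv j x \<in> U j}" for j
  have bad_sets: "bad j \<in> sets M" for j unfolding bad_def by (rule lv_sets[OF lvm])
  have bad_bound: "measure M (bad j) \<le> 1/2 * (1/2)^j" for j
  proof -
    have fin: "finite (U j)" unfolding U_def by auto
    have cU: "card (U j) \<le> (j+1) * length (ds j)"
      unfolding U_def h_def using fl_cover[of "ds j" "j+1"] by simp
    have "measure M (bad j) \<le> real (card (U j)) * (2 / real (h j))"
      unfolding bad_def by (rule level_bound[OF lvm lvb fin])
    also have "\<dots> \<le> real ((j+1) * length (ds j)) * (2 / real (h j))"
      using cU by (intro mult_right_mono) (simp only: of_nat_le_iff, simp)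
    also have "\<dots> \<le> real ((j+1) * length (ds j)) * (2 / real (D j * length (ds j)))"
    proof -
      have p: "0 < D j * length (ds j)" using Dge[of j] ds[of j] by (cases "ds j") auto
      then have p': "0 < real (D j * length (ds j))" by (simp only: of_nat_0_less_iff)
      have r1: "real (D j * length (ds j)) \<le> real (h j)" using hlen[of j] by (simp only: of_nat_le_iff)
      have "0 < real (h j) * real (D j * length (ds j))" using p' r1 by simp
      then have "2 / real (h j) \<le> 2 / real (D j * length (ds j))"
        by (intro divide_left_mono[OF r1]) auto
      then show ?thesis by (intro mult_left_mono) auto
    qed
    also have "\<dots> = 2 * real (j+1) / real (D j)"
    proof -
      have L: "0 < real (length (ds j))" using ds[of j] by (cases "ds j") auto
      have Dp: "0 < real (D j)" using Dge[of j] by simp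
      show ?thesis using aux_cancel[OF L Dp, of "real (j+1)"] by (simp only: of_nat_mult)
    qed
    also have "\<dots> = 1/2 * (1/2)^j"
    proof -
      have e: "real (D j) = 4 * 2^j * real (j+1)" unfolding D_def by (simp only: of_nat_mult of_nat_power of_nat_numeral)
      have a: "(0::real) < real (j+1)" by (simp only: of_nat_0_less_iff zero_less_Suc Suc_eq_plus1[symmetric])
      have t: "(0::real) < 2^j" by simp
      show ?thesis unfolding e aux2[OF a t] by (simp add: power_one_over)
    qed
    finally show ?thesis .
  qed
  have geo2: "summable (\<lambda>j. 1/2 * (1/2::real)^j)"
    using summable_mult[OF summable_geometric[of "1/2::real"], of "1/2"] by simp
  have bsumm: "summable (\<lambda>j. measure M (bad j))"
    by (rule summable_comparison_test'[OF geo2]) (use bad_bound in auto)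
  have AE1: "AE x in M. eventually (\<lambda>j. x \<in> space M - bad j) sequentially"
    by (rule borel_cantelli_AE1[OF bad_sets _ bsumm]) (simp add: emeasure_eq_measure)
  have AE2: "AE x in M. \<forall>j. \<forall>n. lv j x + n < h j \<longrightarrow> lv j ((T^^n) x) = lv j x + n"
    using lv by (subst AE_all_countable) blast
  have "AE x in M. \<exists>\<^sub>\<infinity>n. n \<ge> 1 \<and> (T ^^ n) x \<in> B n"
    using AE1 AE2
  proof eventually_elim
    case (elim x)
    obtain J where J: "\<And>j. J \<le> j \<Longrightarrow> x \<notin> bad j"
      using elim(1) unfolding eventually_sequentially by auto
    show ?case unfolding INFM_nat_le
    proof
      fix m
      define j where "j = max J m"
      have "x \<notin> bad j" using J unfolding j_def by simp
      then have "lv j x \<notin> U j" unfolding bad_def by simp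
      then obtain s where s: "s < h j" "lv j x + (j+1) \<le> s" "s \<le> lv j x + fl (ds j) s"
        unfolding U_def using lvlt[of j x] by auto
      define n where "n = s - lv j x"
      have nge: "j + 1 \<le> n" using s unfolding n_def by simp
      have "lv j x + n < h j" using s unfolding n_def by simp
      then have "lv j ((T^^n) x) = s" using elim(2) s unfolding n_def by simp
      then have "n \<le> \<psi> j ((T^^n) x)" unfolding \<psi>_def using s unfolding n_def by simp
      then have "(T^^n) x \<in> K n" unfolding K_def by blast
      moreover have "1 \<le> n" using nge by simp
      ultimately have "(T^^n) x \<in> B n" using B by blast
      moreover have "m \<le> n" using nge unfolding j_def by simp
      ultimately show "\<exists>n\<ge>m. n \<ge> 1 \<and> (T ^^ n) x \<in> B n" using \<open>1 \<le> n\<close> by blast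
    qed
  qed
  then show ?thesis using B by blast
qed

end

theorem mainTheorem11:
  fixes M :: "'a::polish_space measure" and \<tau> :: "'a \<Rightarrow> 'a" and \<epsilon> :: "nat \<Rightarrow> real"
  assumes "standard_prob_space M" and "non_atomic M"
    and "invertible_mpt M \<tau>" and "ergodic M \<tau>"
    and "\<forall>n\<ge>1. 0 < \<epsilon> n \<and> \<epsilon> n \<le> 1"
    and "\<forall>n\<ge>1. \<epsilon> (Suc n) \<le> \<epsilon> n"
    and "\<epsilon> \<longlonglongrightarrow> 0"
    and "\<not> summable (\<lambda>n. \<epsilon> (Suc n))"
  shows "\<exists>B :: nat \<Rightarrow> 'a set.
           (\<forall>n\<ge>1. B n \<in> sets M \<and> measure M (B n) = \<epsilon> n \<and> B (Suc n) \<subseteq> B n)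
         \<and> (AE x in M. \<exists>\<^sub>\<infinity>n. n \<ge> 1 \<and> (\<tau> ^^ n) x \<in> B n)"
proof -
  have ps: "prob_space M" and sb: "sets M = sets borel"
    using assms(1) unfolding standard_prob_space_def by auto
  have spc: "space M = UNIV" using sets_eq_imp_space_eq[OF sb] by simp
  have "measure_preserving_map M \<tau>" using assms(3) unfolding invertible_mpt_def by blast
  then have Tm: "\<tau> \<in> measurable M M" and dst: "distr M M \<tau> = M"
    unfolding measure_preserving_map_def by auto
  have Tp: "measure M (\<tau> -` A) = measure M A" if A: "A \<in> sets M" for A
  proof -
    have "measure M A = measure (distr M M \<tau>) A" using dst by simp
    also have "\<dots> = measure M (\<tau> -` A \<inter> space M)" by (rule measure_distr[OF Tm A])
    finally show ?thesis using spc by simp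
  qed
  interpret tgt M \<tau>
    by (rule tgt.intro[OF ps], unfold_locales) (use spc assms(2,4) Tm Tp in auto)
  show ?thesis using main_loc[of \<epsilon>] assms(5,6,8) by blast
qed

end
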